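(* If $X$ is a finite quasi-metric space, then \[ |X|_{\mathbb{Q}(q^\mathbb{R})} = \sum_{n=0}^\infty (-1)^n \,\mathrm{rk}\, \mathit{HM}_n(X)\] in $\mathbb{Q}(\!(q^\mathbb{R})\!)$, the infinite sum converging in the topology of $\mathbb{Q}(\!(q^\mathbb{R})\!)$.
   Context: A quasi-metric space is a skeletal $[0,\infty)$-enriched category ($d(x,x)=0$, triangle inequality, $d(x,y)>0$ for $x\ne y$, not necessarily symmetric). $\mathbb{Q}(q^\mathbb{R})$ is the field of generalized rational functions (fractions of finite sums $\sum a_i q^{\ell_i}$, $a_i\in\mathbb{Q}$, $\ell_i\in\mathbb{R}$), embedded in the field $\mathbb{Q}(\!(q^\mathbb{R})\!)$ of Hahn series (formal $\sum_\ell a_\ell q^\ell$ with well-ordered support), which carries the valuation topology (a series converges iff the smallest exponents of its terms tend to $\infty$). The magnitude $|X|_{\mathbb{Q}(q^\mathbb{R})}$ is the sum of all entries of the inverse of the matrix $Z_X(x,y)=q^{d(x,y)}$ (which is invertible over $\mathbb{Q}(q^\mathbb{R})$ for finite quasi-metric spaces). Magnitude homology: $\mathit{HM}_n(X)=\{\mathit{HM}^\ell_n(X)\}_{\ell\in\mathbb{R}}$, where $\mathit{HM}^\ell_n(X)$ is the degree-$n$ homology of the chain complex whose $n$-chains in grading $\ell$ are freely generated by tuples $(x_0,\dots,x_n)$ with $x_i\neq x_{i+1}$ and $d(x_0,x_1)+\cdots+d(x_{n-1},x_n)=\ell$, with boundary $\sum_i(-1)^i d^i$ where $d^i$ deletes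 $x_i$ if $d(x_{i-1},x_i)+d(x_i,x_{i+1})=d(x_{i-1},x_{i+1})$ (for interior $i$; endpoint deletions always change the distance) and is $0$ otherwise. Its rank $\mathrm{rk}\,\mathit{HM}_n(X)$ is the Hahn series $\sum_\ell \mathrm{rk}(\mathit{HM}^\ell_n(X))\,q^\ell$. *)

theory Defs
  imports "HOL-Analysis.Analysis" "HOL-Library.Function_Algebras"
begin

definition quasi_metric_space :: "'a set \<Rightarrow> ('a \<Rightarrow> 'a \<Rightarrow> real) \<Rightarrow> bool" where
  "quasi_metric_space X d \<longleftrightarrow>
     (\<forall>x\<in>X. d x x = 0) \<and>
     (\<forall>x\<in>X. \<forall>y\<in>X. \<forall>z\<in>X. d x z \<le> d x y + d y z) \<and>
     (\<forall>x\<in>X. \<forall>y\<in>X. x \<noteq> y \<longrightarrow> d x y > 0)"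

text \<open>A Hahn series sum_l a_l q^l is represented by its coefficient function l |-> a_l;
  it must have well-ordered support.\<close>

definition hahn :: "(real \<Rightarrow> rat) \<Rightarrow> bool" where
  "hahn f \<longleftrightarrow> (\<forall>S. S \<subseteq> {l. f l \<noteq> 0} \<longrightarrow> S \<noteq> {} \<longrightarrow> (\<exists>m\<in>S. \<forall>s\<in>S. m \<le> s))"

definition qpow :: "real \<Rightarrow> (real \<Rightarrow> rat)" where
  "qpow a = (\<lambda>l. if l = a then 1 else 0)"

text \<open>Product of Hahn series (the index sets are finite for Hahn series).\<close>
definition hahn_mult :: "(real \<Rightarrow> rat) \<Rightarrow> (real \<Rightarrow> rat) \<Rightarrow> (real \<Rightarrow> rat)" where
  "hahn_mult f g = (\<lambda>l. \<Sum>a\<in>{a. f a \<noteq> 0 \<and> g (l - a) \<noteq> 0}. f a * g (l - a))"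

text \<open>Convergence in the valuation topology: s_N -> S iff the valuation of S - s_N tends to
  infinity, i.e. for every bound L eventually s_N and S agree at all exponents below L.\<close>
definition hahn_tendsto :: "(nat \<Rightarrow> (real \<Rightarrow> rat)) \<Rightarrow> (real \<Rightarrow> rat) \<Rightarrow> bool" where
  "hahn_tendsto s S \<longleftrightarrow> (\<forall>L::real. \<exists>N0. \<forall>N\<ge>N0. \<forall>l<L. s N l = S l)"

definition similarity_matrix :: "('a \<Rightarrow> 'a \<Rightarrow> real) \<Rightarrow> 'a \<Rightarrow> 'a \<Rightarrow> (real \<Rightarrow> rat)" where
  "similarity_matrix d x y = qpow (d x y)"

definition is_inverse_of_Z :: "'a set \<Rightarrow> ('a \<Rightarrow> 'a \<Rightarrow> real) \<Rightarrow> ('a \<Rightarrow> 'a \<Rightarrow> (real \<Rightarrow> rat)) \<Rightarrow> bool" where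
  "is_inverse_of_Z X d W \<longleftrightarrow>
     (\<forall>x\<in>X. \<forall>y\<in>X. hahn (W x y)) \<and>
     (\<forall>x\<in>X. \<forall>z\<in>X. (\<lambda>l. \<Sum>y\<in>X. hahn_mult (similarity_matrix d x y) (W y z) l)
                        = (if x = z then qpow 0 else (\<lambda>_. 0))) \<and>
     (\<forall>x\<in>X. \<forall>z\<in>X. (\<lambda>l. \<Sum>y\<in>X. hahn_mult (W x y) (similarity_matrix d y z) l)
                        = (if x = z then qpow 0 else (\<lambda>_. 0)))"

definition magnitude :: "'a set \<Rightarrow> ('a \<Rightarrow> 'a \<Rightarrow> real) \<Rightarrow> (real \<Rightarrow> rat)" where
  "magnitude X d = (THE m. \<exists>W. is_inverse_of_Z X d W \<and> m = (\<lambda>l. \<Sum>x\<in>X. \<Sum>y\<in>X. W x y l))"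

definition mag_gens :: "'a set \<Rightarrow> ('a \<Rightarrow> 'a \<Rightarrow> real) \<Rightarrow> nat \<Rightarrow> real \<Rightarrow> 'a list set" where
  "mag_gens X d n l = {t. length t = Suc n \<and> set t \<subseteq> X \<and>
      (\<forall>i<n. t ! i \<noteq> t ! Suc i) \<and> (\<Sum>i<n. d (t ! i) (t ! Suc i)) = l}"

text \<open>Coefficient of the generator u in the boundary of the generator t (of degree n).
  Only interior deletions (1 <= i <= n-1) can contribute; endpoint faces are 0.\<close>
definition bd_coeff :: "('a \<Rightarrow> 'a \<Rightarrow> real) \<Rightarrow> nat \<Rightarrow> 'a list \<Rightarrow> 'a list \<Rightarrow> rat" where
  "bd_coeff d n t u = (\<Sum>i\<in>{1..n-1}.
      if d (t ! (i - 1)) (t ! i) + d (t ! i) (t ! Suc i) = d (t ! (i - 1)) (t ! Suc i)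
         \<and> take i t @ drop (Suc i) t = u
      then (-1) ^ i else 0)"

definition mag_chains :: "'a set \<Rightarrow> ('a \<Rightarrow> 'a \<Rightarrow> real) \<Rightarrow> nat \<Rightarrow> real \<Rightarrow> ('a list \<Rightarrow> rat) set" where
  "mag_chains X d n l = {c. \<forall>t. c t \<noteq> 0 \<longrightarrow> t \<in> mag_gens X d n l}"

definition mag_boundary :: "'a set \<Rightarrow> ('a \<Rightarrow> 'a \<Rightarrow> real) \<Rightarrow> nat \<Rightarrow> real \<Rightarrow> ('a list \<Rightarrow> rat) \<Rightarrow> ('a list \<Rightarrow> rat)" where
  "mag_boundary X d n l c = (\<lambda>u. \<Sum>t\<in>mag_gens X d n l. c t * bd_coeff d n t u)"

definition mag_cycles :: "'a set \<Rightarrow> ('a \<Rightarrow> 'a \<Rightarrow> real) \<Rightarrow> nat \<Rightarrow> real \<Rightarrow> ('a list \<Rightarrow> rat) set" where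
  "mag_cycles X d n l = {c \<in> mag_chains X d n l. mag_boundary X d n l c = (\<lambda>_. 0)}"

definition mag_boundaries :: "'a set \<Rightarrow> ('a \<Rightarrow> 'a \<Rightarrow> real) \<Rightarrow> nat \<Rightarrow> real \<Rightarrow> ('a list \<Rightarrow> rat) set" where
  "mag_boundaries X d n l = mag_boundary X d (Suc n) l ` mag_chains X d (Suc n) l"

definition rat_scale :: "rat \<Rightarrow> ('a list \<Rightarrow> rat) \<Rightarrow> ('a list \<Rightarrow> rat)" where
  "rat_scale r c = (\<lambda>t. r * c t)"

definition HM_rank :: "'a set \<Rightarrow> ('a \<Rightarrow> 'a \<Rightarrow> real) \<Rightarrow> nat \<Rightarrow> real \<Rightarrow> nat" where
  "HM_rank X d n l = vector_space.dim rat_scale (mag_cycles X d n l)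
                     - vector_space.dim rat_scale (mag_boundaries X d n l)"

definition HM_rank_series :: "'a set \<Rightarrow> ('a \<Rightarrow> 'a \<Rightarrow> real) \<Rightarrow> nat \<Rightarrow> (real \<Rightarrow> rat)" where
  "HM_rank_series X d n = (\<lambda>l. of_nat (HM_rank X d n l))"

end

theory Submission imports Defs begin


context vector_space begin

lemma span_diff_inter_zero:
  assumes "independent B" "finite B" "K \<subseteq> B" "x \<in> span (B - K)" "x \<in> span K"
  shows "x = 0"
proof -
  have fK: "finite K" using assms(2,3) finite_subset by blast
  have fR: "finite (B - K)" using assms(2) by blast
  obtain u where u: "x = (\<Sum>v\<in>B - K. u v *s v)" using assms(4) span_finite[OF fR] by auto
  obtain w where w: "x = (\<Sum>v\<in>K. w v *s v)" using assms(5) span_finite[OF fK] by auto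
  define g where "g v = (if v \<in> K then - w v else u v)" for v
  have "(\<Sum>v\<in>B. g v *s v) = (\<Sum>v\<in>B - K. g v *s v) + (\<Sum>v\<in>K. g v *s v)"
    using sum.subset_diff[OF assms(3) assms(2)] by simp
  also have "(\<Sum>v\<in>B - K. g v *s v) = x" unfolding u g_def by (rule sum.cong) auto
  also have "(\<Sum>v\<in>K. g v *s v) = - x" unfolding w g_def
    by (simp add: sum_negf[symmetric])
  finally have "(\<Sum>v\<in>B. g v *s v) = 0" by simp
  then have "\<forall>v\<in>B. g v = 0" using assms(1,2) independent_explicit_finite_subsets by blast
  then have "\<forall>v\<in>B - K. u v = 0" unfolding g_def by auto
  then show ?thesis unfolding u by simp
qed

lemma rank_nullity_sub:
  assumes lin: "module_hom scale scale f" and sub: "subspace C" and fin: "finite G"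
    and CG: "C \<subseteq> span G"
  shows "dim C = dim {c\<in>C. f c = 0} + dim (f ` C)"
proof -
  interpret lf: module_hom scale scale f by (rule lin)
  let ?V = "{c\<in>C. f c = 0}"
  obtain K where K: "K \<subseteq> ?V" "independent K" "?V \<subseteq> span K" "card K = dim ?V"
    using basis_exists by blast
  obtain B where B: "K \<subseteq> B" "B \<subseteq> C" "independent B" "C \<subseteq> span B"
    using maximal_independent_subset_extend[of K C] K by auto
  have finB: "finite B" using independent_span_bound[OF fin B(3)] B CG by auto
  have dimC: "dim C = card B" using basis_card_eq_dim B by auto
  have finK: "finite K" using finB B(1) finite_subset by blast
  let ?R = "B - K"
  have spR: "span ?R \<subseteq> C" using B(2) sub span_minimal[of ?R C] by blast
  have injR: "inj_on f (span ?R)"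
  proof (subst lf.inj_on_iff_eq_0)
    show "subspace (span ?R)" by (rule subspace_span)
    show "\<forall>x\<in>span ?R. f x = 0 \<longrightarrow> x = 0"
    proof (intro ballI impI)
      fix x assume x: "x \<in> span ?R" "f x = 0"
      then have "x \<in> ?V" using spR by auto
      then have "x \<in> span K" using K(3) by auto
      then show "x = 0" using span_diff_inter_zero[OF B(3) finB B(1) x(1)] by simp
    qed
  qed
  have indR: "independent ?R" using B(3) independent_mono by blast
  have indfR: "independent (f ` ?R)"
    using lf.independent_injective_image[OF indR injR] .
  have cardfR: "card (f ` ?R) = card ?R"
    using card_image inj_on_subset[OF injR span_superset] by blast
  have sp1: "span (f ` ?R) \<subseteq> span (f ` C)" using B(2) by (intro span_mono) auto
  have "f ` B \<subseteq> insert 0 (f ` ?R)" using K(1) by auto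
  then have "span (f ` B) \<subseteq> span (f ` ?R)"
    using span_mono[of "f ` B" "insert 0 (f ` ?R)"] span_insert_0 by simp
  moreover have "f ` C \<subseteq> span (f ` B)"
    using B(4) lf.span_image[of B] by auto
  ultimately have "f ` C \<subseteq> span (f ` ?R)" by auto
  then have sp2: "span (f ` C) \<subseteq> span (f ` ?R)"
    using span_minimal[OF _ subspace_span] by blast
  have "dim (f ` C) = card (f ` ?R)"
    using dim_eq_card[of "f ` ?R" "f ` C"] sp1 sp2 indfR by auto
  moreover have "card B = card K + card ?R"
    using card_Diff_subset[OF finK B(1)] card_mono[OF finB B(1)] by simp
  ultimately show ?thesis using dimC K(4) cardfR by simp
qed

lemma dim_mono_fin:
  assumes "S \<subseteq> T" "T \<subseteq> span G" "finite G"
  shows "dim S \<le> dim T"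
proof -
  obtain K where K: "K \<subseteq> T" "independent K" "T \<subseteq> span K" "card K = dim T"
    using basis_exists by blast
  have "finite K" using independent_span_bound[OF assms(3) K(2)] K(1) assms(2) by auto
  then show ?thesis using dim_le_card[of S K] K assms(1) by auto
qed

lemma dim_zero_set: "dim {0} = 0"
proof -
  have "dim {0} = dim (span {0})" by simp
  also have "span {0} = span {}" using span_insert_0[of "{}"] by simp
  also have "dim (span {}) = 0" using dim_span_eq_card_independent[OF independent_empty] by simp
  finally show ?thesis .
qed

end

lemma sum_fun_apply: "(\<Sum>i\<in>S. (f i :: 'b \<Rightarrow> 'c::comm_monoid_add)) x = (\<Sum>i\<in>S. f i x)"
  by (induction S rule: infinite_finite_induct) auto

lemma vs_rat: "vector_space (rat_scale :: rat \<Rightarrow> ('a list \<Rightarrow> rat) \<Rightarrow> _)"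
  by unfold_locales (auto simp: rat_scale_def fun_eq_iff algebra_simps)



fun plen :: "('a \<Rightarrow> 'a \<Rightarrow> real) \<Rightarrow> 'a list \<Rightarrow> real" where
  "plen d (x # y # r) = d x y + plen d (y # r)"
| "plen d _ = 0"

fun pok :: "'a list \<Rightarrow> bool" where
  "pok (x # y # r) = (x \<noteq> y \<and> pok (y # r))"
| "pok _ = True"

definition del :: "nat \<Rightarrow> 'a list \<Rightarrow> 'a list" where
  "del i t = take i t @ drop (Suc i) t"

lemma gens_nth:
  "length t = Suc n \<Longrightarrow> (\<forall>i<n. t!i \<noteq> t!Suc i) = pok t \<and> (\<Sum>i<n. d (t!i) (t!Suc i)) = plen d t"
proof (induction n arbitrary: t)
  case 0
  then obtain x where "t = [x]" by (cases t) auto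
  then show ?case by simp
next
  case (Suc n)
  then obtain x y r where t: "t = x # y # r" by (cases t; cases "tl t") auto
  have IH: "(\<forall>i<n. (y#r)!i \<noteq> (y#r)!Suc i) = pok (y#r) \<and> (\<Sum>i<n. d ((y#r)!i) ((y#r)!Suc i)) = plen d (y#r)"
    using Suc.IH[of "y#r"] Suc.prems t by simp
  have "(\<forall>i<Suc n. t!i \<noteq> t!Suc i) = (x \<noteq> y \<and> (\<forall>i<n. (y#r)!i \<noteq> (y#r)!Suc i))"
    unfolding t by (auto simp: less_Suc_eq_0_disj)
  moreover have "(\<Sum>i<Suc n. d (t!i) (t!Suc i)) = d x y + (\<Sum>i<n. d ((y#r)!i) ((y#r)!Suc i))"
    unfolding t by (subst sum.lessThan_Suc_shift) simp
  moreover have "pok t = (x \<noteq> y \<and> pok (y#r))" "plen d t = d x y + plen d (y#r)" by (simp_all add: t)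
  ultimately show ?case using IH by (simp only:)
qed

lemma mag_gens_char:
  "mag_gens X d n l = {t. length t = Suc n \<and> set t \<subseteq> X \<and> pok t \<and> plen d t = l}"
  unfolding mag_gens_def
proof (rule Collect_cong)
  fix t show "(length t = Suc n \<and> set t \<subseteq> X \<and> (\<forall>i<n. t ! i \<noteq> t ! Suc i) \<and> (\<Sum>i<n. d (t ! i) (t ! Suc i)) = l)
     = (length t = Suc n \<and> set t \<subseteq> X \<and> pok t \<and> plen d t = l)"
  proof (cases "length t = Suc n")
    case True
    from gens_nth[OF True, of d] have A: "(\<forall>i<n. t ! i \<noteq> t ! Suc i) = pok t"
      and B: "(\<Sum>i<n. d (t ! i) (t ! Suc i)) = plen d t" by blast+
    show ?thesis by (simp only: A B)
  next
    case False then show ?thesis by blast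
  qed
qed

lemma plen_append: "plen d (a @ p # r) = plen d (a @ [p]) + plen d (p # r)"
  by (induction a rule: induct_list012) auto

lemma pok_append: "pok (a @ p # r) = (pok (a @ [p]) \<and> pok (p # r))"
  by (induction a rule: induct_list012) auto

lemma decomp3:
  assumes "1 \<le> i" "Suc i < length t"
  obtains a p x q b where "t = a @ p # x # q # b" "length a = i - 1"
proof -
  have "length (drop (i - 1) t) \<ge> 3" using assms by simp
  then obtain p x q b where "drop (i - 1) t = p # x # q # b"
    by (metis Suc_le_length_iff numeral_3_eq_3)
  then have "t = take (i - 1) t @ p # x # q # b" by (metis append_take_drop_id)
  moreover have "length (take (i - 1) t) = i - 1" using assms by simp
  ultimately show ?thesis using that by blast
qed

lemma decomp3_facts:
  assumes "t = a @ p # x # q # b" "length a = i - 1" "1 \<le> i"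
  shows "t!(i-1) = p" "t!i = x" "t!Suc i = q" "del i t = a @ p # q # b"
proof -
  have i: "i = Suc (length a)" using assms by simp
  show "t!(i-1) = p" "t!i = x" "t!Suc i = q" using assms(1) i by (simp_all add: nth_append)
  show "del i t = a @ p # q # b" using assms(1) i by (simp add: del_def)
qed

lemma plen_del:
  assumes "1 \<le> i" "Suc i < length t"
  shows "plen d (del i t) = plen d t - d (t!(i-1)) (t!i) - d (t!i) (t!Suc i) + d (t!(i-1)) (t!Suc i)"
proof -
  obtain a p x q b where ab: "t = a @ p # x # q # b" "length a = i - 1" using decomp3[OF assms] by blast
  note F = decomp3_facts[OF ab assms(1)]
  show ?thesis unfolding F using ab(1) by (simp add: plen_append[of d a p "x # q # b"] plen_append[of d a p "q # b"])
qed

lemma pok_del: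
  assumes "1 \<le> i" "Suc i < length t" "pok t" "t!(i-1) \<noteq> t!Suc i"
  shows "pok (del i t)"
proof -
  obtain a p x q b where ab: "t = a @ p # x # q # b" "length a = i - 1" using decomp3[OF assms(1,2)] by blast
  note F = decomp3_facts[OF ab assms(1)]
  have pq: "p \<noteq> q" using assms(4) F(1,3) by simp
  show ?thesis unfolding F(4) using assms(3) pq ab(1) by (simp add: pok_append[of a p "x # q # b"] pok_append[of a p "q # b"])
qed

lemma set_del: "set (del i t) \<subseteq> set t"
  unfolding del_def by (auto dest: in_set_takeD in_set_dropD)

lemma length_del: "i < length t \<Longrightarrow> length (del i t) = length t - 1"
  unfolding del_def by simp

lemma del_del:
  assumes "i < j" "j < length t"
  shows "del (j - 1) (del i t) = del i (del j t)"
proof -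
  have il: "i < length t" using assms by simp
  have t1: "t = take i t @ t!i # drop (Suc i) t" using id_take_nth_drop[OF il] .
  let ?r = "drop (Suc i) t"
  have "j - Suc i < length ?r" using assms by simp
  then have t2: "?r = take (j - Suc i) ?r @ ?r!(j - Suc i) # drop (Suc (j - Suc i)) ?r"
    using id_take_nth_drop by blast
  define a where "a = take i t"
  define x where "x = t!i"
  define b where "b = take (j - Suc i) ?r"
  define y where "y = ?r!(j - Suc i)"
  define c where "c = drop (Suc (j - Suc i)) ?r"
  have t: "t = a @ x # b @ y # c" unfolding a_def x_def b_def y_def c_def
    by (subst t2[symmetric]) (rule t1)
  have la: "length a = i" using assms unfolding a_def by simp
  have lb: "length b = j - Suc i" using assms unfolding b_def by simp
  have j: "j = length a + Suc (length b)" using la lb assms by simp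
  have "del i t = a @ b @ y # c" unfolding t del_def using la by simp
  then have "del (j - 1) (del i t) = a @ b @ c" unfolding del_def j by simp
  moreover have "del j t = a @ x # b @ c" unfolding t del_def j by simp
  then have "del i (del j t) = a @ b @ c" unfolding del_def using la by simp
  ultimately show ?thesis by simp
qed



definition cnd :: "('a \<Rightarrow> 'a \<Rightarrow> real) \<Rightarrow> 'a list \<Rightarrow> nat \<Rightarrow> bool" where
  "cnd d t i \<longleftrightarrow> d (t!(i-1)) (t!i) + d (t!i) (t!Suc i) = d (t!(i-1)) (t!Suc i)"


lemma qms_tri: assumes "quasi_metric_space X d" "x \<in> X" "y \<in> X" "z \<in> X" shows "d x z \<le> d x y + d y z"
  using assms unfolding quasi_metric_space_def by simp

lemma qms_refl: "quasi_metric_space X d \<Longrightarrow> x \<in> X \<Longrightarrow> d x x = 0"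
  unfolding quasi_metric_space_def by simp

lemma qms_pos: "quasi_metric_space X d \<Longrightarrow> x \<in> X \<Longrightarrow> y \<in> X \<Longrightarrow> x \<noteq> y \<Longrightarrow> 0 < d x y"
  unfolding quasi_metric_space_def by simp

lemma qms_nonneg: "quasi_metric_space X d \<Longrightarrow> x \<in> X \<Longrightarrow> y \<in> X \<Longrightarrow> 0 \<le> d x y"
  using qms_refl[of X d x] qms_pos[of X d x y] by (cases "x = y") auto

lemma cnd_iff:
  assumes q: "quasi_metric_space X d" and X: "set t \<subseteq> X" and i: "1 \<le> i" "Suc i < length t"
  shows "plen d (del i t) \<le> plen d t \<and> (cnd d t i \<longleftrightarrow> plen d (del i t) = plen d t)"
proof -
  have m: "t!(i-1) \<in> X" "t!i \<in> X" "t!Suc i \<in> X" using X i by (auto intro!: subsetD[OF X] nth_mem)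
  have "d (t!(i-1)) (t!Suc i) \<le> d (t!(i-1)) (t!i) + d (t!i) (t!Suc i)" using qms_tri[OF q m] .
  moreover note pd = plen_del[OF i, of d]
  ultimately show ?thesis unfolding cnd_def pd by (intro conjI iffI) linarith+
qed

lemma finite_gens: "finite X \<Longrightarrow> finite (mag_gens X d n l)"
proof (rule finite_subset[of _ "{t. set t \<subseteq> X \<and> length t = Suc n}"])
  show "mag_gens X d n l \<subseteq> {t. set t \<subseteq> X \<and> length t = Suc n}" unfolding mag_gens_def by blast
qed (rule finite_lists_length_eq)

lemma del_gens:
  assumes q: "quasi_metric_space X d" and t: "t \<in> mag_gens X d n l"
    and i: "1 \<le> i" "i < n" and c: "cnd d t i"
  shows "del i t \<in> mag_gens X d (n - 1) l"
proof -
  have lt: "length t = Suc n" and X: "set t \<subseteq> X" and pk: "pok t" and pl: "plen d t = l"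
    using t unfolding mag_gens_char by auto
  have "\<forall>k<n. t!k \<noteq> t!Suc k" using t unfolding mag_gens_def by blast
  moreover have "i - 1 < n" using i by simp
  ultimately have "t!(i-1) \<noteq> t!Suc (i-1)" by blast
  moreover have "Suc (i - 1) = i" using i by simp
  ultimately have adj: "t!(i-1) \<noteq> t!i" by simp
  have i2: "Suc i < length t" using lt i by simp
  have m: "t!(i-1) \<in> X" "t!i \<in> X" "t!Suc i \<in> X" using X i2 by (auto intro!: subsetD[OF X] nth_mem)
  have ne: "t!(i-1) \<noteq> t!Suc i"
  proof
    assume e: "t!(i-1) = t!Suc i"
    have "d (t!(i-1)) (t!i) + d (t!i) (t!(i-1)) = 0" using c e qms_refl[OF q m(1)] unfolding cnd_def by simp
    moreover have "0 \<le> d (t!i) (t!(i-1))" using qms_nonneg[OF q m(2) m(1)] .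
    moreover have "0 < d (t!(i-1)) (t!i)" using qms_pos[OF q m(1) m(2) adj] .
    ultimately show False by linarith
  qed
  have "i < length t" using i2 by simp
  then have "length (del i t) = length t - 1" by (rule length_del)
  then have "length (del i t) = Suc (n - 1)" using lt i by simp
  moreover have "set (del i t) \<subseteq> X" using set_del[of i t] X by (rule order.trans)
  moreover have "pok (del i t)" using pok_del[OF i(1) i2 pk ne] .
  moreover have "plen d (del i t) = l" using cnd_iff[OF q X i(1) i2] c pl by simp
  ultimately show ?thesis unfolding mag_gens_char by simp
qed

lemma if_mult0: "(if P then a else 0) * b = (if P then a * b else (0::'b::mult_zero))"
  by simp

lemma bd_rewrite: "bd_coeff d m t u = (\<Sum>i\<in>{1..m-1}. if cnd d t i \<and> del i t = u then (-1)^i else 0)"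
  unfolding bd_coeff_def cnd_def del_def by simp

lemma pair_cancel:
  fixes f :: "nat \<Rightarrow> nat \<Rightarrow> rat"
  assumes "\<And>i j. 1 \<le> i \<Longrightarrow> i < j \<Longrightarrow> j \<le> n \<Longrightarrow> f i (j - 1) = - f j i"
  shows "(\<Sum>j\<in>{1..n}. \<Sum>i\<in>{1..n-1}. f j i) = 0"
proof -
  let ?S = "{1..n} \<times> {1..n-1}"
  let ?S1 = "{p\<in>?S. snd p < fst p}"
  let ?S2 = "{p\<in>?S. fst p \<le> snd p}"
  have "(\<Sum>j\<in>{1..n}. \<Sum>i\<in>{1..n-1}. f j i) = (\<Sum>p\<in>?S. f (fst p) (snd p))"
    by (simp add: sum.cartesian_product case_prod_beta)
  also have "?S = ?S1 \<union> ?S2" by auto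
  also have "(\<Sum>p\<in>?S1 \<union> ?S2. f (fst p) (snd p)) = (\<Sum>p\<in>?S1. f (fst p) (snd p)) + (\<Sum>p\<in>?S2. f (fst p) (snd p))"
    by (rule sum.union_disjoint) auto
  also have "(\<Sum>p\<in>?S2. f (fst p) (snd p)) = (\<Sum>p\<in>?S1. f (snd p) (fst p - 1))"
  proof (rule sum.reindex_bij_witness[symmetric, where j = "\<lambda>p. (snd p, fst p - 1)" and i = "\<lambda>p. (snd p + 1, fst p)"])
    fix p assume "p \<in> ?S1" then show "(snd (snd p, fst p - 1) + 1, fst (snd p, fst p - 1)) = p" by (cases p) auto
  next
    fix p assume "p \<in> ?S1" then show "(snd p, fst p - 1) \<in> ?S2" by (cases p) auto
  next
    fix p assume "p \<in> ?S2" then show "(snd (snd p + 1, fst p), fst (snd p + 1, fst p) - 1) = p" by (cases p) auto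
  next
    fix p assume "p \<in> ?S2" then show "(snd p + 1, fst p) \<in> ?S1" by (cases p) auto
  next
    fix p assume "p \<in> ?S1" then show "f (fst (snd p, fst p - 1)) (snd (snd p, fst p - 1)) = f (snd p) (fst p - 1)" by simp
  qed
  also have "\<dots> = (\<Sum>p\<in>?S1. - f (fst p) (snd p))"
  proof (rule sum.cong[OF refl])
    fix p assume "p \<in> ?S1"
    then show "f (snd p) (fst p - 1) = - f (fst p) (snd p)" by (intro assms) auto
  qed
  finally show ?thesis by (simp add: sum_negf)
qed

lemma chain_eq:
  fixes A B C :: real
  shows "A \<le> B \<Longrightarrow> B \<le> C \<Longrightarrow> (P \<longleftrightarrow> B = C) \<Longrightarrow> (Q \<longleftrightarrow> A = B) \<Longrightarrow> (P \<and> Q \<longleftrightarrow> A = C)"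
  by linarith

lemma bd_bd_gen:
  assumes q: "quasi_metric_space X d" and fX: "finite X" and t: "t \<in> mag_gens X d (Suc n) l"
  shows "(\<Sum>u\<in>mag_gens X d n l. bd_coeff d (Suc n) t u * bd_coeff d n u v) = 0"
proof -
  let ?G = "mag_gens X d n l"
  have lt: "length t = Suc (Suc n)" and X: "set t \<subseteq> X"
    using t unfolding mag_gens_char by auto
  define f where "f j i = (if cnd d t j \<and> cnd d (del j t) i \<and> del i (del j t) = v then (-1)^j * (-1)^i else (0::rat))" for j i
  have "(\<Sum>u\<in>?G. bd_coeff d (Suc n) t u * bd_coeff d n u v)
      = (\<Sum>u\<in>?G. \<Sum>j\<in>{1..n}. (if cnd d t j \<and> del j t = u then (-1)^j * bd_coeff d n u v else 0))"
    unfolding bd_rewrite[of d "Suc n"] by (simp add: sum_distrib_right if_mult0)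
  also have "\<dots> = (\<Sum>j\<in>{1..n}. \<Sum>u\<in>?G. (if cnd d t j \<and> del j t = u then (-1)^j * bd_coeff d n u v else 0))"
    by (rule sum.swap)
  also have "\<dots> = (\<Sum>j\<in>{1..n}. if cnd d t j then (-1)^j * bd_coeff d n (del j t) v else 0)"
  proof (rule sum.cong[OF refl])
    fix j assume j: "j \<in> {1..n}"
    show "(\<Sum>u\<in>?G. (if cnd d t j \<and> del j t = u then (-1)^j * bd_coeff d n u v else 0))
        = (if cnd d t j then (-1)^j * bd_coeff d n (del j t) v else 0)"
    proof (cases "cnd d t j")
      case True
      have "del j t \<in> ?G" using del_gens[OF q t _ _ True] j by auto
      then show ?thesis using True finite_gens[OF fX] by (simp add: sum.delta)
    qed simp
  qed
  also have "\<dots> = (\<Sum>j\<in>{1..n}. \<Sum>i\<in>{1..n-1}. f j i)"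
  proof (rule sum.cong[OF refl])
    fix j assume j: "j \<in> {1..n}"
    show "(if cnd d t j then (-1)^j * bd_coeff d n (del j t) v else 0) = (\<Sum>i\<in>{1..n-1}. f j i)"
    proof (cases "cnd d t j")
      case True
      have "(-1)^j * bd_coeff d n (del j t) v = (\<Sum>i\<in>{1..n-1}. (-1)^j * (if cnd d (del j t) i \<and> del i (del j t) = v then (-1)^i else 0))"
        unfolding bd_rewrite[of d n] by (rule sum_distrib_left)
      also have "\<dots> = (\<Sum>i\<in>{1..n-1}. f j i)"
        by (rule sum.cong[OF refl]) (simp add: f_def True)
      finally show ?thesis using True by simp
    next
      case False
      then show ?thesis by (simp add: f_def)
    qed
  qed
  also have "\<dots> = 0"
  proof (rule pair_cancel)
    fix i j assume ij: "1 \<le> i" "i < j" "j \<le> n"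
    have jl: "j < length t" using ij lt by simp
    have dd: "del (j - 1) (del i t) = del i (del j t)" using del_del[OF ij(2) jl] .
    have li: "length (del i t) = Suc n" and lj: "length (del j t) = Suc n"
      using length_del[of i t] length_del[of j t] lt ij by auto
    have Xi: "set (del i t) \<subseteq> X" using set_del[of i t] X by (rule order.trans)
    have Xj: "set (del j t) \<subseteq> X" using set_del[of j t] X by (rule order.trans)
    note c1 = cnd_iff[OF q X ij(1), of ] 
    have e1: "(cnd d t i \<and> cnd d (del i t) (j - 1)) \<longleftrightarrow> plen d (del (j - 1) (del i t)) = plen d t"
    proof -
      have a: "plen d (del i t) \<le> plen d t \<and> (cnd d t i \<longleftrightarrow> plen d (del i t) = plen d t)"
        using cnd_iff[OF q X ij(1)] lt ij by simp
      have b: "plen d (del (j-1) (del i t)) \<le> plen d (del i t) \<and> (cnd d (del i t) (j-1) \<longleftrightarrow> plen d (del (j-1) (del i t)) = plen d (del i t))"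
        using cnd_iff[OF q Xi, of "j-1"] li ij by simp
      show ?thesis using chain_eq[of "plen d (del (j-1) (del i t))" "plen d (del i t)" "plen d t"] a b by blast
    qed
    have e2: "(cnd d t j \<and> cnd d (del j t) i) \<longleftrightarrow> plen d (del i (del j t)) = plen d t"
    proof -
      have a: "plen d (del j t) \<le> plen d t \<and> (cnd d t j \<longleftrightarrow> plen d (del j t) = plen d t)"
        using cnd_iff[OF q X, of j] lt ij by simp
      have b: "plen d (del i (del j t)) \<le> plen d (del j t) \<and> (cnd d (del j t) i \<longleftrightarrow> plen d (del i (del j t)) = plen d (del j t))"
        using cnd_iff[OF q Xj, of i] lj ij by simp
      show ?thesis using chain_eq[of "plen d (del i (del j t))" "plen d (del j t)" "plen d t"] a b by blast
    qed
    have sg: "(-1::rat)^i * (-1)^(j-1) = - ((-1)^j * (-1)^i)"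
    proof -
      have "(-1::rat)^j = - ((-1)^(j-1))" using ij by (cases j) auto
      then show ?thesis by simp
    qed
    have ee: "(cnd d t i \<and> cnd d (del i t) (j-1) \<and> del (j-1) (del i t) = v) = (cnd d t j \<and> cnd d (del j t) i \<and> del i (del j t) = v)"
      using e1 e2 dd by auto
    show "f i (j - 1) = - f j i"
      unfolding f_def ee sg by simp
  qed
  finally show ?thesis .
qed

lemma boundary_chains:
  assumes q: "quasi_metric_space X d" and fX: "finite X"
  shows "mag_boundary X d (Suc n) l c \<in> mag_chains X d n l"
  unfolding mag_chains_def
proof (intro CollectI allI impI)
  fix u assume "mag_boundary X d (Suc n) l c u \<noteq> 0"
  then obtain t where t: "t \<in> mag_gens X d (Suc n) l" and b: "bd_coeff d (Suc n) t u \<noteq> 0"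
    unfolding mag_boundary_def by (auto elim!: sum.not_neutral_contains_not_neutral)
  then obtain i where i: "i \<in> {1..n}" "cnd d t i" "del i t = u"
    unfolding bd_rewrite by (auto elim!: sum.not_neutral_contains_not_neutral split: if_splits)
  show "u \<in> mag_gens X d n l" using del_gens[OF q t _ _ i(2)] i by auto
qed

lemma bd_bd:
  assumes q: "quasi_metric_space X d" and fX: "finite X" and c: "c \<in> mag_chains X d (Suc n) l"
  shows "mag_boundary X d n l (mag_boundary X d (Suc n) l c) = (\<lambda>_. 0)"
proof
  fix v
  have "mag_boundary X d n l (mag_boundary X d (Suc n) l c) v
     = (\<Sum>u\<in>mag_gens X d n l. \<Sum>t\<in>mag_gens X d (Suc n) l. c t * (bd_coeff d (Suc n) t u * bd_coeff d n u v))"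
    unfolding mag_boundary_def by (simp add: sum_distrib_right mult.assoc)
  also have "\<dots> = (\<Sum>t\<in>mag_gens X d (Suc n) l. c t * (\<Sum>u\<in>mag_gens X d n l. bd_coeff d (Suc n) t u * bd_coeff d n u v))"
    by (subst sum.swap) (simp add: sum_distrib_left)
  also have "\<dots> = 0" using bd_bd_gen[OF q fX] by simp
  finally show "mag_boundary X d n l (mag_boundary X d (Suc n) l c) v = 0" .
qed



interpretation rs: vector_space "rat_scale :: rat \<Rightarrow> ('a list \<Rightarrow> rat) \<Rightarrow> ('a list \<Rightarrow> rat)"
  by (rule vs_rat)

definition evec :: "'a list \<Rightarrow> ('a list \<Rightarrow> rat)" where
  "evec t = (\<lambda>u. if u = t then 1 else 0)"

lemma chains_sub: "rs.subspace (mag_chains X d n l)"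
  unfolding rs.subspace_def mag_chains_def rat_scale_def by (auto) (metis add_0)

lemma boundary_hom: "module_hom rat_scale rat_scale (mag_boundary X d n l)"
  unfolding module_hom_iff
proof (intro conjI allI)
  show "module (rat_scale :: rat \<Rightarrow> ('a list \<Rightarrow> rat) \<Rightarrow> _)"
    using vs_rat module_iff_vector_space by blast
  then show "module (rat_scale :: rat \<Rightarrow> ('a list \<Rightarrow> rat) \<Rightarrow> _)" .
  fix x y :: "'a list \<Rightarrow> rat"
  show "mag_boundary X d n l (x + y) = mag_boundary X d n l x + mag_boundary X d n l y"
    unfolding mag_boundary_def by (auto simp: fun_eq_iff sum.distrib algebra_simps)
next
  fix c :: rat and x :: "'a list \<Rightarrow> rat"
  show "mag_boundary X d n l (rat_scale c x) = rat_scale c (mag_boundary X d n l x)"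
    unfolding mag_boundary_def rat_scale_def by (auto simp: fun_eq_iff sum_distrib_left algebra_simps)
qed

lemma evec_inj: "inj evec"
  unfolding evec_def inj_def by (metis fun_eq_iff zero_neq_one)

lemma chains_span:
  assumes fX: "finite X"
  shows "mag_chains X d n l \<subseteq> rs.span (evec ` mag_gens X d n l)"
proof
  fix c assume c: "c \<in> mag_chains X d n l"
  let ?G = "mag_gens X d n l"
  have "c = (\<Sum>t\<in>?G. rat_scale (c t) (evec t))"
  proof
    fix u
    have "(\<Sum>t\<in>?G. rat_scale (c t) (evec t)) u = (\<Sum>t\<in>?G. c t * evec t u)"
      by (simp add: sum_fun_apply rat_scale_def)
    also have "\<dots> = (\<Sum>t\<in>?G. if t = u then c t else 0)"
      by (rule sum.cong) (auto simp: evec_def)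
    also have "\<dots> = c u" using c finite_gens[OF fX] unfolding mag_chains_def by (auto simp: sum.delta)
    finally show "c u = (\<Sum>t\<in>?G. rat_scale (c t) (evec t)) u" by simp
  qed
  also have "\<dots> \<in> rs.span (evec ` ?G)"
    by (intro rs.span_sum rs.span_scale rs.span_base) auto
  finally show "c \<in> rs.span (evec ` ?G)" .
qed

lemma evec_indep:
  assumes fX: "finite X"
  shows "rs.independent (evec ` mag_gens X d n l)"
proof (rule rs.independent_if_scalars_zero)
  let ?G = "mag_gens X d n l"
  show "finite (evec ` ?G)" using finite_gens[OF fX] by simp
  fix f x assume s: "(\<Sum>x\<in>evec ` ?G. rat_scale (f x) x) = 0" and x: "x \<in> evec ` ?G"
  then obtain t where t: "t \<in> ?G" "x = evec t" by auto
  have "(\<Sum>x\<in>evec ` ?G. rat_scale (f x) x) = (\<Sum>t\<in>?G. rat_scale (f (evec t)) (evec t))"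
    using sum.reindex[OF inj_on_subset[OF evec_inj]] by simp
  then have "0 = (\<Sum>t'\<in>?G. rat_scale (f (evec t')) (evec t')) t" using s by simp
  also have "\<dots> = (\<Sum>t'\<in>?G. f (evec t') * evec t' t)"
    by (simp add: sum_fun_apply rat_scale_def)
  also have "\<dots> = (\<Sum>t'\<in>?G. if t' = t then f (evec t') else 0)"
    by (rule sum.cong) (auto simp: evec_def)
  also have "\<dots> = f (evec t)" using t finite_gens[OF fX] by (simp add: sum.delta)
  finally show "f x = 0" using t by simp
qed

lemma chains_dim:
  assumes fX: "finite X"
  shows "rs.dim (mag_chains X d n l) = card (mag_gens X d n l)"
proof -
  let ?G = "mag_gens X d n l"
  have sub: "evec ` ?G \<subseteq> mag_chains X d n l" unfolding mag_chains_def evec_def by (auto split: if_splits)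
  have "rs.span (evec ` ?G) = rs.span (mag_chains X d n l)"
  proof
    show "rs.span (evec ` ?G) \<subseteq> rs.span (mag_chains X d n l)" using sub by (rule rs.span_mono)
    show "rs.span (mag_chains X d n l) \<subseteq> rs.span (evec ` ?G)"
      using chains_span[OF fX] rs.span_minimal[OF _ rs.subspace_span] by blast
  qed
  then have "rs.dim (mag_chains X d n l) = card (evec ` ?G)"
    using rs.dim_eq_card evec_indep[OF fX] by blast
  also have "\<dots> = card ?G" using card_image[OF inj_on_subset[OF evec_inj]] by blast
  finally show ?thesis .
qed

lemma cycles_eq: "mag_cycles X d n l = {c\<in>mag_chains X d n l. mag_boundary X d n l c = 0}"
  unfolding mag_cycles_def zero_fun_def by simp

lemma rank_nullity_mag:
  assumes fX: "finite X"
  shows "card (mag_gens X d n l) = rs.dim (mag_cycles X d n l) + rs.dim (mag_boundary X d n l ` mag_chains X d n l)"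
  using rs.rank_nullity_sub[OF boundary_hom chains_sub finite_imageI[OF finite_gens[OF fX]] chains_span[OF fX]]
  unfolding chains_dim[OF fX] cycles_eq .

lemma boundary0: "mag_boundary X d 0 l c = 0"
  unfolding mag_boundary_def bd_coeff_def by (simp add: zero_fun_def)

lemma dim_im0: "rs.dim (mag_boundary X d 0 l ` mag_chains X d 0 l) = 0"
proof -
  have "(0::'a list \<Rightarrow> rat) \<in> mag_chains X d 0 l" unfolding mag_chains_def by simp
  then have "mag_boundary X d 0 l ` mag_chains X d 0 l = {0}" using boundary0 by auto
  then show ?thesis using rs.dim_zero_set by simp
qed

lemma boundaries_sub_cycles:
  assumes q: "quasi_metric_space X d" and fX: "finite X"
  shows "mag_boundaries X d n l \<subseteq> mag_cycles X d n l"
  unfolding mag_boundaries_def mag_cycles_def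
  using boundary_chains[OF q fX] bd_bd[OF q fX] by blast

lemma dim_bd_le:
  assumes q: "quasi_metric_space X d" and fX: "finite X"
  shows "rs.dim (mag_boundaries X d n l) \<le> rs.dim (mag_cycles X d n l)"
proof (rule rs.dim_mono_fin[OF boundaries_sub_cycles[OF q fX]])
  show "mag_cycles X d n l \<subseteq> rs.span (evec ` mag_gens X d n l)"
    using chains_span[OF fX] unfolding mag_cycles_def by blast
qed (use finite_gens[OF fX] in simp)

lemma euler_alg:
  fixes z e c :: "nat \<Rightarrow> nat"
  assumes "\<And>n. c n = z n + e n" "\<And>n. e (Suc n) \<le> z n"
  shows "(\<Sum>n<N. (-1)^n * of_nat (z n - e (Suc n)) :: rat)
       = (\<Sum>n<N. (-1)^n * of_nat (c n)) - of_nat (e 0) + (-1)^N * of_nat (e N)"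
proof (induction N)
  case 0 then show ?case by simp
next
  case (Suc N)
  have "of_nat (z N - e (Suc N)) = (of_nat (z N) - of_nat (e (Suc N)) :: rat)"
    using assms(2)[of N] by (simp add: of_nat_diff)
  then show ?case using Suc assms(1)[of N] by (simp add: algebra_simps)
qed

lemma euler_mag:
  assumes q: "quasi_metric_space X d" and fX: "finite X" and e: "mag_gens X d N l = {}"
  shows "(\<Sum>n<N. (-1)^n * HM_rank_series X d n l) = (\<Sum>n<N. (-1)^n * of_nat (card (mag_gens X d n l)))"
proof -
  define z where "z n = rs.dim (mag_cycles X d n l)" for n
  define ee where "ee n = rs.dim (mag_boundary X d n l ` mag_chains X d n l)" for n
  define c where "c n = card (mag_gens X d n l)" for n
  have c: "c n = z n + ee n" for n unfolding c_def z_def ee_def using rank_nullity_mag[OF fX] .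
  have le: "ee (Suc n) \<le> z n" for n
    unfolding ee_def z_def using dim_bd_le[OF q fX] unfolding mag_boundaries_def .
  have hm: "HM_rank_series X d n l = of_nat (z n - ee (Suc n))" for n
    unfolding HM_rank_series_def HM_rank_def z_def ee_def mag_boundaries_def by simp
  have e0: "ee 0 = 0" unfolding ee_def by (rule dim_im0)
  have eN: "ee N = 0" using c[of N] e unfolding c_def by simp
  show ?thesis unfolding hm euler_alg[of c z ee, OF c le] e0 eN c_def by simp
qed



fun paths :: "'a set \<Rightarrow> ('a \<Rightarrow> 'a \<Rightarrow> real) \<Rightarrow> nat \<Rightarrow> 'a \<Rightarrow> 'a \<Rightarrow> real \<Rightarrow> 'a list set" where
  "paths X d 0 x z l = (if x = z \<and> l = 0 then {[x]} else {})"
| "paths X d (Suc n) x z l = (\<Union>y\<in>X - {x}. (Cons x) ` paths X d n y z (l - d x y))"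

lemma paths_hd: "t \<in> paths X d n x z l \<Longrightarrow> t \<noteq> [] \<and> hd t = x \<and> last t = z"
proof (induction n arbitrary: x l t)
  case 0 then show ?case by (simp split: if_splits)
next
  case (Suc n)
  then obtain y t' where "t = x # t'" "t' \<in> paths X d n y z (l - d x y)" by auto
  then show ?case using Suc.IH by auto
qed

lemma paths_fin: "finite X \<Longrightarrow> finite (paths X d n x z l)"
  by (induction n arbitrary: x l) auto

lemma paths_char:
  assumes "x \<in> X" "z \<in> X"
  shows "paths X d n x z l = {t \<in> mag_gens X d n l. hd t = x \<and> last t = z}"
  using assms(1)
proof (induction n arbitrary: x l)
  case 0
  show ?case
  proof
    show "paths X d 0 x z l \<subseteq> {t \<in> mag_gens X d 0 l. hd t = x \<and> last t = z}"
      using 0 by (auto simp: mag_gens_char)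
    show "{t \<in> mag_gens X d 0 l. hd t = x \<and> last t = z} \<subseteq> paths X d 0 x z l"
    proof
      fix t assume t: "t \<in> {t \<in> mag_gens X d 0 l. hd t = x \<and> last t = z}"
      then obtain a where "t = [a]" unfolding mag_gens_char by (cases t) auto
      then show "t \<in> paths X d 0 x z l" using t unfolding mag_gens_char by auto
    qed
  qed
next
  case (Suc n)
  show ?case
  proof
    show "paths X d (Suc n) x z l \<subseteq> {t \<in> mag_gens X d (Suc n) l. hd t = x \<and> last t = z}"
    proof
      fix t assume "t \<in> paths X d (Suc n) x z l"
      then obtain y t' where y: "y \<in> X" "y \<noteq> x" and t: "t = x # t'" and t': "t' \<in> paths X d n y z (l - d x y)" by auto
      have t'': "t' \<in> mag_gens X d n (l - d x y)" "hd t' = y" "last t' = z" using t' Suc.IH[OF y(1)] by auto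
      then obtain r where r: "t' = y # r" unfolding mag_gens_char by (cases t') auto
      have "length t' = Suc n" "set t' \<subseteq> X" "pok t'" "plen d t' = l - d x y" using t''(1) unfolding mag_gens_char by auto
      then show "t \<in> {t \<in> mag_gens X d (Suc n) l. hd t = x \<and> last t = z}"
        unfolding mag_gens_char using t r y Suc.prems t''(3) by auto
    qed
    show "{t \<in> mag_gens X d (Suc n) l. hd t = x \<and> last t = z} \<subseteq> paths X d (Suc n) x z l"
    proof
      fix t assume t: "t \<in> {t \<in> mag_gens X d (Suc n) l. hd t = x \<and> last t = z}"
      then have L: "length t = Suc (Suc n)" "set t \<subseteq> X" "pok t" "plen d t = l" "hd t = x" "last t = z"
        unfolding mag_gens_char by auto
      then obtain y r where tr: "t = x # y # r"
        by (metis Suc_length_conv list.sel(1))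
      have y: "y \<in> X" "y \<noteq> x" using L tr by auto
      have "y # r \<in> mag_gens X d n (l - d x y)" unfolding mag_gens_char using L tr by auto
      moreover have "last (y # r) = z" using L tr by simp
      ultimately have "y # r \<in> paths X d n y z (l - d x y)" using Suc.IH[OF y(1)] by simp
      then show "t \<in> paths X d (Suc n) x z l" using y tr by auto
    qed
  qed
qed

lemma paths_card_rec:
  assumes "finite X"
  shows "card (paths X d (Suc n) x z l) = (\<Sum>y\<in>X - {x}. card (paths X d n y z (l - d x y)))"
proof -
  have "card (paths X d (Suc n) x z l) = (\<Sum>y\<in>X - {x}. card ((Cons x) ` paths X d n y z (l - d x y)))"
    unfolding paths.simps
  proof (rule card_UN_disjoint)
    show "finite (X - {x})" using assms by simp
    show "\<forall>y\<in>X - {x}. finite ((Cons x) ` paths X d n y z (l - d x y))" using paths_fin[OF assms] by simp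
    show "\<forall>y\<in>X - {x}. \<forall>y'\<in>X - {x}. y \<noteq> y' \<longrightarrow> (Cons x) ` paths X d n y z (l - d x y) \<inter> (Cons x) ` paths X d n y' z (l - d x y') = {}"
    proof (intro ballI impI equals0I)
      fix y y' u assume yy: "y \<noteq> y'" and u: "u \<in> (Cons x) ` paths X d n y z (l - d x y) \<inter> (Cons x) ` paths X d n y' z (l - d x y')"
      then obtain t t' where tt: "u = x # t" "t \<in> paths X d n y z (l - d x y)" "u = x # t'" "t' \<in> paths X d n y' z (l - d x y')"
        by blast
      then have "t = t'" by simp
      then show False using paths_hd[OF tt(2)] paths_hd[OF tt(4)] yy by simp
    qed
  qed
  also have "\<dots> = (\<Sum>y\<in>X - {x}. card (paths X d n y z (l - d x y)))"
    by (rule sum.cong[OF refl]) (simp add: card_image)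
  finally show ?thesis .
qed

lemma paths_bound:
  assumes "x \<in> X" "\<forall>x\<in>X. \<forall>y\<in>X. x \<noteq> y \<longrightarrow> \<delta> \<le> d x y" "t \<in> paths X d n x z l"
  shows "real n * \<delta> \<le> l"
  using assms
proof (induction n arbitrary: x l t)
  case 0 then show ?case by (simp split: if_splits)
next
  case (Suc n)
  then obtain y t' where y: "y \<in> X" "y \<noteq> x" and t': "t' \<in> paths X d n y z (l - d x y)" by auto
  have "real n * \<delta> \<le> l - d x y" using Suc.IH[OF y(1) Suc.prems(2) t'] .
  moreover have "\<delta> \<le> d x y" using Suc.prems(1,2) y by auto
  ultimately show ?case by (simp add: algebra_simps)
qed

lemma gens_card_paths:
  assumes fX: "finite X"
  shows "card (mag_gens X d n l) = (\<Sum>x\<in>X. \<Sum>z\<in>X. card (paths X d n x z l))"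
proof -
  have G: "mag_gens X d n l = (\<Union>x\<in>X. \<Union>z\<in>X. paths X d n x z l)"
  proof
    show "mag_gens X d n l \<subseteq> (\<Union>x\<in>X. \<Union>z\<in>X. paths X d n x z l)"
    proof
      fix t assume t: "t \<in> mag_gens X d n l"
      then have "t \<noteq> []" "set t \<subseteq> X" unfolding mag_gens_char by auto
      then have hx: "hd t \<in> X" and hl: "last t \<in> X" by auto
      have "t \<in> paths X d n (hd t) (last t) l" using paths_char[OF hx hl] t by simp
      then show "t \<in> (\<Union>x\<in>X. \<Union>z\<in>X. paths X d n x z l)" using hx hl by blast
    qed
    show "(\<Union>x\<in>X. \<Union>z\<in>X. paths X d n x z l) \<subseteq> mag_gens X d n l"
    proof
      fix t assume "t \<in> (\<Union>x\<in>X. \<Union>z\<in>X. paths X d n x z l)"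
      then obtain x z where xz: "x \<in> X" "z \<in> X" "t \<in> paths X d n x z l" by blast
      then show "t \<in> mag_gens X d n l" using paths_char[OF xz(1,2)] by simp
    qed
  qed
  have "card (\<Union>x\<in>X. \<Union>z\<in>X. paths X d n x z l) = (\<Sum>x\<in>X. card (\<Union>z\<in>X. paths X d n x z l))"
  proof (rule card_UN_disjoint)
    show "finite X" by fact
    show "\<forall>x\<in>X. finite (\<Union>z\<in>X. paths X d n x z l)" using fX paths_fin[OF fX] by simp
    show "\<forall>x\<in>X. \<forall>x'\<in>X. x \<noteq> x' \<longrightarrow> (\<Union>z\<in>X. paths X d n x z l) \<inter> (\<Union>z\<in>X. paths X d n x' z l) = {}"
    proof (intro ballI impI equals0I)
      fix x x' t assume xx: "x \<noteq> x'" and t: "t \<in> (\<Union>z\<in>X. paths X d n x z l) \<inter> (\<Union>z\<in>X. paths X d n x' z l)"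
      then obtain z z' where "t \<in> paths X d n x z l" "t \<in> paths X d n x' z' l" by blast
      then show False using paths_hd[of t X d n x z l] paths_hd[of t X d n x' z' l] xx by simp
    qed
  qed
  also have "\<dots> = (\<Sum>x\<in>X. \<Sum>z\<in>X. card (paths X d n x z l))"
  proof (rule sum.cong[OF refl], rule card_UN_disjoint)
    show "finite X" by fact
    fix x show "\<forall>z\<in>X. finite (paths X d n x z l)" using paths_fin[OF fX] by simp
    show "\<forall>z\<in>X. \<forall>z'\<in>X. z \<noteq> z' \<longrightarrow> paths X d n x z l \<inter> paths X d n x z' l = {}"
    proof (intro ballI impI equals0I)
      fix z z' t assume zz: "z \<noteq> z'" and t: "t \<in> paths X d n x z l \<inter> paths X d n x z' l"
      then show False using paths_hd[of t X d n x z l] paths_hd[of t X d n x z' l] zz by simp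
    qed
  qed
  finally show ?thesis using G by simp
qed



definition Pn :: "'a set \<Rightarrow> ('a \<Rightarrow> 'a \<Rightarrow> real) \<Rightarrow> nat \<Rightarrow> 'a \<Rightarrow> 'a \<Rightarrow> real \<Rightarrow> rat" where
  "Pn X d n x z l = of_nat (card (paths X d n x z l))"

lemma Pn_0: "Pn X d 0 x z l = (if x = z \<and> l = 0 then 1 else 0)"
  unfolding Pn_def by simp

lemma Pn_Suc:
  assumes "finite X" shows "Pn X d (Suc n) x z l = (\<Sum>y\<in>X - {x}. Pn X d n y z (l - d x y))"
  unfolding Pn_def paths_card_rec[OF assms] of_nat_sum ..

lemma sum_if_eq1:
  assumes "finite S"
  shows "(\<Sum>y\<in>S. if y = z \<and> Q y then (1::rat) else 0) = (if z \<in> S \<and> Q z then 1 else 0)"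
proof -
  have "(\<Sum>y\<in>S. if y = z \<and> Q y then (1::rat) else 0) = (\<Sum>y\<in>S. if y = z then (if Q z then 1 else 0) else 0)"
    by (rule sum.cong) auto
  then show ?thesis using assms by (simp add: sum.delta)
qed

lemma sum_if_eq2:
  assumes "finite S"
  shows "(\<Sum>y\<in>S. if z = y \<and> Q y then (1::rat) else 0) = (if z \<in> S \<and> Q z then 1 else 0)"
proof -
  have "(\<Sum>y\<in>S. if z = y \<and> Q y then (1::rat) else 0) = (\<Sum>y\<in>S. if y = z \<and> Q y then 1 else 0)"
    by (rule sum.cong) auto
  then show ?thesis using sum_if_eq1[OF assms] by simp
qed

lemma Pn_Suc_right:
  assumes fX: "finite X" and "x \<in> X" "z \<in> X"
  shows "Pn X d (Suc n) x z l = (\<Sum>y\<in>X - {z}. Pn X d n x y (l - d y z))"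
  using assms(2,3)
proof (induction n arbitrary: x z l)
  case 0
  have "Pn X d (Suc 0) x z l = (\<Sum>y\<in>X - {x}. if y = z \<and> l - d x y = 0 then 1 else 0)"
    unfolding Pn_Suc[OF fX] Pn_0 ..
  also have "\<dots> = (if z \<in> X - {x} \<and> l - d x z = 0 then 1 else 0)" by (rule sum_if_eq1) (simp add: fX)
  also have "\<dots> = (if x \<in> X - {z} \<and> l - d x z = 0 then 1 else 0)" using 0 by auto
  also have "\<dots> = (\<Sum>y\<in>X - {z}. if x = y \<and> l - d y z = 0 then 1 else 0)" by (rule sum_if_eq2[symmetric]) (simp add: fX)
  also have "\<dots> = (\<Sum>y\<in>X - {z}. Pn X d 0 x y (l - d y z))" unfolding Pn_0 ..
  finally show ?case .
next
  case (Suc n)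
  have "Pn X d (Suc (Suc n)) x z l = (\<Sum>y\<in>X - {x}. Pn X d (Suc n) y z (l - d x y))"
    by (rule Pn_Suc[OF fX])
  also have "\<dots> = (\<Sum>y\<in>X - {x}. \<Sum>w\<in>X - {z}. Pn X d n y w (l - d x y - d w z))"
    by (rule sum.cong[OF refl]) (use Suc in auto)
  also have "\<dots> = (\<Sum>w\<in>X - {z}. \<Sum>y\<in>X - {x}. Pn X d n y w (l - d w z - d x y))"
    by (subst sum.swap) (intro sum.cong refl, simp add: diff_diff_eq add.commute)
  also have "\<dots> = (\<Sum>w\<in>X - {z}. Pn X d (Suc n) x w (l - d w z))"
    by (rule sum.cong[OF refl]) (simp add: Pn_Suc[OF fX])
  finally show ?case .
qed

definition Nb :: "real \<Rightarrow> real \<Rightarrow> nat" where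
  "Nb \<delta> l = nat \<lfloor>l / \<delta>\<rfloor> + 1"

lemma Nb_big:
  assumes "\<delta> > 0" "Nb \<delta> l \<le> n"
  shows "l < real n * \<delta>"
proof -
  have "l / \<delta> < real_of_int \<lfloor>l / \<delta>\<rfloor> + 1" by linarith
  also have "real_of_int \<lfloor>l / \<delta>\<rfloor> \<le> real (nat \<lfloor>l / \<delta>\<rfloor>)" by linarith
  also have "real (nat \<lfloor>l / \<delta>\<rfloor>) + 1 \<le> real n" using assms(2) unfolding Nb_def by linarith
  finally have "l / \<delta> < real n" by simp
  then show ?thesis using assms(1) by (simp add: divide_less_eq)
qed

lemma Nb_mono:
  assumes "\<delta> > 0" "l \<le> l'"
  shows "Nb \<delta> l \<le> Nb \<delta> l'"
proof -
  have "l / \<delta> \<le> l' / \<delta>" using assms by (simp add: divide_right_mono)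
  then have "\<lfloor>l / \<delta>\<rfloor> \<le> \<lfloor>l' / \<delta>\<rfloor>" by (rule floor_mono)
  then show ?thesis unfolding Nb_def by simp
qed

definition dsep :: "'a set \<Rightarrow> ('a \<Rightarrow> 'a \<Rightarrow> real) \<Rightarrow> real \<Rightarrow> bool" where
  "dsep X d \<delta> \<longleftrightarrow> \<delta> > 0 \<and> (\<forall>x\<in>X. \<forall>y\<in>X. x \<noteq> y \<longrightarrow> \<delta> \<le> d x y)"

lemma Pn_zero_big:
  assumes "dsep X d \<delta>" "x \<in> X" "Nb \<delta> l \<le> n"
  shows "Pn X d n x z l = 0"
proof -
  have "paths X d n x z l = {}"
  proof (rule ccontr)
    assume "paths X d n x z l \<noteq> {}"
    then obtain t where "t \<in> paths X d n x z l" by blast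
    moreover have "\<forall>x\<in>X. \<forall>y\<in>X. x \<noteq> y \<longrightarrow> \<delta> \<le> d x y" "\<delta> > 0" using assms(1) unfolding dsep_def by auto
    ultimately have "real n * \<delta> \<le> l" using paths_bound[OF assms(2)] by blast
    moreover have "l < real n * \<delta>" using Nb_big[OF \<open>\<delta> > 0\<close> assms(3)] .
    ultimately show False by simp
  qed
  then show ?thesis unfolding Pn_def by simp
qed

lemma gens_empty_big:
  assumes "dsep X d \<delta>" "Nb \<delta> l \<le> n"
  shows "mag_gens X d n l = {}"
proof (rule ccontr)
  assume "mag_gens X d n l \<noteq> {}"
  then obtain t where t: "t \<in> mag_gens X d n l" by blast
  then have "t \<noteq> []" "set t \<subseteq> X" unfolding mag_gens_char by auto
  then have hx: "hd t \<in> X" and hl: "last t \<in> X" by auto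
  have "t \<in> paths X d n (hd t) (last t) l" using paths_char[OF hx hl] t by simp
  moreover have "\<forall>x\<in>X. \<forall>y\<in>X. x \<noteq> y \<longrightarrow> \<delta> \<le> d x y" "\<delta> > 0" using assms(1) unfolding dsep_def by auto
  ultimately have "real n * \<delta> \<le> l" using paths_bound[OF hx] by blast
  moreover have "l < real n * \<delta>" using Nb_big[OF \<open>\<delta> > 0\<close> assms(2)] .
  ultimately show False by simp
qed

definition Wm :: "'a set \<Rightarrow> ('a \<Rightarrow> 'a \<Rightarrow> real) \<Rightarrow> real \<Rightarrow> 'a \<Rightarrow> 'a \<Rightarrow> real \<Rightarrow> rat" where
  "Wm X d \<delta> x z l = (\<Sum>n<Nb \<delta> l. (-1)^n * Pn X d n x z l)"

lemma Wm_ext: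
  assumes "dsep X d \<delta>" "x \<in> X" "Nb \<delta> l \<le> N"
  shows "Wm X d \<delta> x z l = (\<Sum>n<N. (-1)^n * Pn X d n x z l)"
  unfolding Wm_def
proof (rule sum.mono_neutral_left)
  show "finite {..<N}" by simp
  show "{..<Nb \<delta> l} \<subseteq> {..<N}" using assms(3) by auto
  show "\<forall>i\<in>{..<N} - {..<Nb \<delta> l}. (- 1) ^ i * Pn X d i x z l = 0"
    using Pn_zero_big[OF assms(1,2)] by auto
qed

lemma Wm_right:
  assumes fX: "finite X" and q: "quasi_metric_space X d" and ds: "dsep X d \<delta>" and x: "x \<in> X" and z: "z \<in> X"
  shows "(\<Sum>y\<in>X. Wm X d \<delta> y z (l - d x y)) = (if x = z \<and> l = 0 then 1 else 0)"
proof -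
  let ?N = "Nb \<delta> l"
  have dpos: "\<delta> > 0" using ds unfolding dsep_def by simp
  have "(\<Sum>y\<in>X. Wm X d \<delta> y z (l - d x y)) = (\<Sum>y\<in>X. \<Sum>n<?N. (-1)^n * Pn X d n y z (l - d x y))"
  proof (rule sum.cong[OF refl])
    fix y assume y: "y \<in> X"
    have "0 \<le> d x y" using qms_nonneg[OF q x y] .
    then have "Nb \<delta> (l - d x y) \<le> ?N" using Nb_mono[OF dpos] by simp
    then show "Wm X d \<delta> y z (l - d x y) = (\<Sum>n<?N. (-1)^n * Pn X d n y z (l - d x y))"
      using Wm_ext[OF ds y] by blast
  qed
  also have "\<dots> = (\<Sum>n<?N. (-1)^n * (\<Sum>y\<in>X. Pn X d n y z (l - d x y)))"
    by (subst sum.swap) (simp add: sum_distrib_left)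
  also have "\<dots> = (\<Sum>n<?N. (-1)^n * Pn X d n x z l - (-1)^(Suc n) * Pn X d (Suc n) x z l)"
  proof (rule sum.cong[OF refl])
    fix n
    have "(\<Sum>y\<in>X. Pn X d n y z (l - d x y)) = Pn X d n x z (l - d x x) + (\<Sum>y\<in>X - {x}. Pn X d n y z (l - d x y))"
      using sum.remove[OF fX x] by blast
    also have "\<dots> = Pn X d n x z l + Pn X d (Suc n) x z l"
      using qms_refl[OF q x] Pn_Suc[OF fX] by simp
    finally show "(-1)^n * (\<Sum>y\<in>X. Pn X d n y z (l - d x y)) = (-1)^n * Pn X d n x z l - (-1)^(Suc n) * Pn X d (Suc n) x z l"
      by (simp add: algebra_simps)
  qed
  also have "\<dots> = (-1)^0 * Pn X d 0 x z l - (-1)^?N * Pn X d ?N x z l"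
    by (rule sum_lessThan_telescope'[where f = "\<lambda>n. (-1)^n * Pn X d n x z l"])
  also have "Pn X d ?N x z l = 0" using Pn_zero_big[OF ds x] by simp
  finally show ?thesis by (simp add: Pn_0)
qed

lemma Wm_left:
  assumes fX: "finite X" and q: "quasi_metric_space X d" and ds: "dsep X d \<delta>" and x: "x \<in> X" and z: "z \<in> X"
  shows "(\<Sum>y\<in>X. Wm X d \<delta> x y (l - d y z)) = (if x = z \<and> l = 0 then 1 else 0)"
proof -
  let ?N = "Nb \<delta> l"
  have dpos: "\<delta> > 0" using ds unfolding dsep_def by simp
  have "(\<Sum>y\<in>X. Wm X d \<delta> x y (l - d y z)) = (\<Sum>y\<in>X. \<Sum>n<?N. (-1)^n * Pn X d n x y (l - d y z))"
  proof (rule sum.cong[OF refl])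
    fix y assume y: "y \<in> X"
    have "0 \<le> d y z" using qms_nonneg[OF q y z] .
    then have "Nb \<delta> (l - d y z) \<le> ?N" using Nb_mono[OF dpos] by simp
    then show "Wm X d \<delta> x y (l - d y z) = (\<Sum>n<?N. (-1)^n * Pn X d n x y (l - d y z))"
      using Wm_ext[OF ds x] by blast
  qed
  also have "\<dots> = (\<Sum>n<?N. (-1)^n * (\<Sum>y\<in>X. Pn X d n x y (l - d y z)))"
    by (subst sum.swap) (simp add: sum_distrib_left)
  also have "\<dots> = (\<Sum>n<?N. (-1)^n * Pn X d n x z l - (-1)^(Suc n) * Pn X d (Suc n) x z l)"
  proof (rule sum.cong[OF refl])
    fix n
    have "(\<Sum>y\<in>X. Pn X d n x y (l - d y z)) = Pn X d n x z (l - d z z) + (\<Sum>y\<in>X - {z}. Pn X d n x y (l - d y z))"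
      using sum.remove[OF fX z] by blast
    also have "\<dots> = Pn X d n x z l + Pn X d (Suc n) x z l"
      using qms_refl[OF q z] Pn_Suc_right[OF fX x z] by simp
    finally show "(-1)^n * (\<Sum>y\<in>X. Pn X d n x y (l - d y z)) = (-1)^n * Pn X d n x z l - (-1)^(Suc n) * Pn X d (Suc n) x z l"
      by (simp add: algebra_simps)
  qed
  also have "\<dots> = (-1)^0 * Pn X d 0 x z l - (-1)^?N * Pn X d ?N x z l"
    by (rule sum_lessThan_telescope'[where f = "\<lambda>n. (-1)^n * Pn X d n x z l"])
  also have "Pn X d ?N x z l = 0" using Pn_zero_big[OF ds x] by simp
  finally show ?thesis by (simp add: Pn_0)
qed



lemma hm_left: "hahn_mult (qpow a) g l = g (l - a)"
proof -
  have "{a'. qpow a a' \<noteq> 0 \<and> g (l - a') \<noteq> 0} = (if g (l - a) \<noteq> 0 then {a} else {})"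
    unfolding qpow_def by auto
  then show ?thesis unfolding hahn_mult_def by (simp add: qpow_def)
qed

lemma hm_right: "hahn_mult f (qpow a) l = f (l - a)"
proof -
  have "{a'. f a' \<noteq> 0 \<and> qpow a (l - a') \<noteq> 0} = (if f (l - a) \<noteq> 0 then {l - a} else {})"
    unfolding qpow_def by auto
  then show ?thesis unfolding hahn_mult_def by (simp add: qpow_def)
qed

lemma hahn_locfin:
  assumes "\<And>s. finite {a. f a \<noteq> 0 \<and> a \<le> s}"
  shows "hahn f"
  unfolding hahn_def
proof (intro allI impI)
  fix S assume S: "S \<subseteq> {l. f l \<noteq> 0}" "S \<noteq> {}"
  then obtain s where s: "s \<in> S" by blast
  let ?T = "{a\<in>S. a \<le> s}"
  have fT: "finite ?T" by (rule finite_subset[of _ "{a. f a \<noteq> 0 \<and> a \<le> s}"]) (use S(1) assms in auto)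
  have neT: "?T \<noteq> {}" using s by auto
  have "Min ?T \<in> S" using Min_in[OF fT neT] by simp
  moreover have "\<forall>x\<in>S. Min ?T \<le> x"
  proof
    fix x assume x: "x \<in> S"
    show "Min ?T \<le> x"
    proof (cases "x \<le> s")
      case True then show ?thesis using Min_le[OF fT] x by simp
    next
      case False
      have "Min ?T \<le> s" using Min_le[OF fT] s by simp
      then show ?thesis using False by simp
    qed
  qed
  ultimately show "\<exists>m\<in>S. \<forall>s\<in>S. m \<le> s" by blast
qed

lemma hahn_lb:
  assumes "hahn f"
  shows "\<exists>m. \<forall>a. f a \<noteq> 0 \<longrightarrow> m \<le> a"
proof (cases "{l. f l \<noteq> 0} = {}")
  case True then show ?thesis by auto
next
  case False
  then obtain m where "m \<in> {l. f l \<noteq> 0}" "\<forall>s\<in>{l. f l \<noteq> 0}. m \<le> s"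
    using assms unfolding hahn_def by blast
  then show ?thesis by auto
qed

lemma sum_shift:
  fixes g :: "real \<Rightarrow> rat"
  assumes fA: "finite A" and fB: "finite B"
    and AB: "\<And>a. a \<in> A \<Longrightarrow> g a \<noteq> 0 \<Longrightarrow> c - a \<in> B"
    and BA: "\<And>b. b \<in> B \<Longrightarrow> g (c - b) \<noteq> 0 \<Longrightarrow> c - b \<in> A"
  shows "(\<Sum>a\<in>A. g a) = (\<Sum>b\<in>B. g (c - b))"
proof -
  let ?B' = "(\<lambda>b. c - b) ` B"
  have inj: "inj_on (\<lambda>b. c - b) B" by (rule inj_onI) simp
  have "(\<Sum>b\<in>B. g (c - b)) = (\<Sum>a\<in>?B'. g a)"
    using sum.reindex[OF inj, of g] by (simp add: comp_def)
  also have "\<dots> = (\<Sum>a\<in>A \<union> ?B'. g a)"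
  proof (rule sum.mono_neutral_left)
    show "finite (A \<union> ?B')" using fA fB by simp
    show "?B' \<subseteq> A \<union> ?B'" by blast
    show "\<forall>i\<in>A \<union> ?B' - ?B'. g i = 0"
    proof
      fix a assume a: "a \<in> A \<union> ?B' - ?B'"
      show "g a = 0"
      proof (rule ccontr)
        assume "g a \<noteq> 0"
        then have "c - a \<in> B" using AB a by blast
        then have "c - (c - a) \<in> ?B'" by blast
        then show False using a by simp
      qed
    qed
  qed
  also have "\<dots> = (\<Sum>a\<in>A. g a)"
  proof (rule sum.mono_neutral_right)
    show "finite (A \<union> ?B')" using fA fB by simp
    show "A \<subseteq> A \<union> ?B'" by blast
    show "\<forall>i\<in>A \<union> ?B' - A. g i = 0"
    proof
      fix a assume a: "a \<in> A \<union> ?B' - A"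
      then obtain b where b: "b \<in> B" "a = c - b" by blast
      show "g a = 0"
      proof (rule ccontr)
        assume "g a \<noteq> 0"
        then have "c - b \<in> A" using BA b by blast
        then show False using a b by simp
      qed
    qed
  qed
  finally show ?thesis by simp
qed



lemma Wm_locfin:
  assumes fX: "finite X" and ds: "dsep X d \<delta>" and x: "x \<in> X" and y: "y \<in> X"
  shows "finite {a. Wm X d \<delta> x y a \<noteq> 0 \<and> a \<le> s}"
proof (rule finite_subset)
  have dpos: "\<delta> > 0" using ds unfolding dsep_def by simp
  show "{a. Wm X d \<delta> x y a \<noteq> 0 \<and> a \<le> s} \<subseteq> (\<Union>n<Nb \<delta> s. plen d ` {t. set t \<subseteq> X \<and> length t = Suc n})"
  proof
    fix a assume a: "a \<in> {a. Wm X d \<delta> x y a \<noteq> 0 \<and> a \<le> s}"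
    then obtain n where n: "n < Nb \<delta> a" "(-1)^n * Pn X d n x y a \<noteq> 0"
      unfolding Wm_def by (auto elim!: sum.not_neutral_contains_not_neutral)
    then have "paths X d n x y a \<noteq> {}" unfolding Pn_def by auto
    then obtain t where "t \<in> paths X d n x y a" by blast
    then have t: "t \<in> mag_gens X d n a" using paths_char[OF x y] by simp
    have "n < Nb \<delta> s" using n(1) Nb_mono[OF dpos, of a s] a by simp
    moreover have "a = plen d t" "set t \<subseteq> X" "length t = Suc n" using t unfolding mag_gens_char by auto
    ultimately show "a \<in> (\<Union>n<Nb \<delta> s. plen d ` {t. set t \<subseteq> X \<and> length t = Suc n})" by blast
  qed
  show "finite (\<Union>n<Nb \<delta> s. plen d ` {t. set t \<subseteq> X \<and> length t = Suc n})"
    using fX by (intro finite_UN_I finite_imageI finite_lists_length_eq) auto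
qed

lemma Wm_inverse:
  assumes fX: "finite X" and q: "quasi_metric_space X d" and ds: "dsep X d \<delta>"
  shows "is_inverse_of_Z X d (Wm X d \<delta>)"
  unfolding is_inverse_of_Z_def
proof (intro conjI ballI)
  fix x y assume x: "x \<in> X" and y: "y \<in> X"
  show "hahn (Wm X d \<delta> x y)" by (rule hahn_locfin) (rule Wm_locfin[OF fX ds x y])
next
  fix x z assume x: "x \<in> X" and z: "z \<in> X"
  show "(\<lambda>l. \<Sum>y\<in>X. hahn_mult (similarity_matrix d x y) (Wm X d \<delta> y z) l) = (if x = z then qpow 0 else (\<lambda>_. 0))"
  proof
    fix l
    have "(\<Sum>y\<in>X. hahn_mult (similarity_matrix d x y) (Wm X d \<delta> y z) l) = (\<Sum>y\<in>X. Wm X d \<delta> y z (l - d x y))"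
      unfolding similarity_matrix_def hm_left ..
    also have "\<dots> = (if x = z \<and> l = 0 then 1 else 0)" by (rule Wm_right[OF fX q ds x z])
    finally show "(\<Sum>y\<in>X. hahn_mult (similarity_matrix d x y) (Wm X d \<delta> y z) l) = (if x = z then qpow 0 else (\<lambda>_. 0)) l"
      by (simp add: qpow_def)
  qed
next
  fix x z assume x: "x \<in> X" and z: "z \<in> X"
  show "(\<lambda>l. \<Sum>y\<in>X. hahn_mult (Wm X d \<delta> x y) (similarity_matrix d y z) l) = (if x = z then qpow 0 else (\<lambda>_. 0))"
  proof
    fix l
    have "(\<Sum>y\<in>X. hahn_mult (Wm X d \<delta> x y) (similarity_matrix d y z) l) = (\<Sum>y\<in>X. Wm X d \<delta> x y (l - d y z))"
      unfolding similarity_matrix_def hm_right ..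
    also have "\<dots> = (if x = z \<and> l = 0 then 1 else 0)" by (rule Wm_left[OF fX q ds x z])
    finally show "(\<Sum>y\<in>X. hahn_mult (Wm X d \<delta> x y) (similarity_matrix d y z) l) = (if x = z then qpow 0 else (\<lambda>_. 0)) l"
      by (simp add: qpow_def)
  qed
qed

lemma sum_delta_mult:
  assumes "finite S" "x \<in> S"
  shows "(\<Sum>z\<in>S. (if x = z \<and> P then 1 else 0) * (g z :: rat)) = (if P then g x else 0)"
proof -
  have "(\<Sum>z\<in>S. (if x = z \<and> P then 1 else 0) * g z) = (\<Sum>z\<in>S. if z = x then (if P then g x else 0) else 0)"
    by (rule sum.cong) auto
  then show ?thesis using assms by (simp add: sum.delta)
qed

lemma W_unique:
  assumes fX: "finite X" and q: "quasi_metric_space X d" and ds: "dsep X d \<delta>"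
    and inv: "is_inverse_of_Z X d W'" and x: "x \<in> X" and w: "w \<in> X"
  shows "W' x w l = Wm X d \<delta> x w l"
proof -
  let ?W = "Wm X d \<delta>"
  have hW': "\<forall>y\<in>X. hahn (W' x y)" using inv x unfolding is_inverse_of_Z_def by blast
  have LW': "(\<Sum>y\<in>X. W' x y (l' - d y z)) = (if x = z \<and> l' = 0 then 1 else 0)" if z: "z \<in> X" for z l'
  proof -
    have "(\<lambda>l. \<Sum>y\<in>X. hahn_mult (W' x y) (similarity_matrix d y z) l) = (if x = z then qpow 0 else (\<lambda>_. 0))"
      using inv x z unfolding is_inverse_of_Z_def by blast
    then have "(\<lambda>l. \<Sum>y\<in>X. hahn_mult (W' x y) (similarity_matrix d y z) l) l' = (if x = z then qpow 0 else (\<lambda>_. 0)) l'"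
      by (rule fun_cong)
    then show ?thesis unfolding similarity_matrix_def hm_right by (simp add: qpow_def)
  qed
  have RW: "(\<Sum>z\<in>X. ?W z w (l' - d y z)) = (if y = w \<and> l' = 0 then 1 else 0)" if y: "y \<in> X" for y l'
    using Wm_right[OF fX q ds y w] .
  have "\<forall>y\<in>X. \<exists>m. \<forall>a. W' x y a \<noteq> 0 \<longrightarrow> m \<le> a" using hahn_lb hW' by blast
  then obtain M where M: "\<forall>y\<in>X. \<forall>a. W' x y a \<noteq> 0 \<longrightarrow> M y \<le> a" by metis
  define m where "m = Min (insert 0 (M ` X))"
  have mle: "m \<le> a" if "y \<in> X" "W' x y a \<noteq> 0" for y a
  proof -
    have "m \<le> M y" unfolding m_def using fX that(1) by (intro Min_le) auto
    also have "M y \<le> a" using M that by blast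
    finally show ?thesis .
  qed
  have dnn: "0 \<le> d y z" if "y \<in> X" "z \<in> X" for y z using qms_nonneg[OF q that] .
  define Bs where "Bs = insert l (\<Union>z\<in>X. {b. ?W z w b \<noteq> 0 \<and> b \<le> l - m})"
  have fBs: "finite Bs" unfolding Bs_def using fX Wm_locfin[OF fX ds _ w] by auto
  define F where "F = insert l ((\<lambda>(b,y,z). l - b - d y z) ` (Bs \<times> X \<times> X))"
  have fF: "finite F" unfolding F_def using fX fBs by auto
  define E where "E = (\<Sum>y\<in>X. \<Sum>z\<in>X. \<Sum>b\<in>Bs. W' x y (l - b - d y z) * ?W z w b)"
  have E2: "E = ?W x w l"
  proof -
    have "E = (\<Sum>z\<in>X. \<Sum>y\<in>X. \<Sum>b\<in>Bs. W' x y (l - b - d y z) * ?W z w b)"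
      unfolding E_def by (rule sum.swap)
    also have "\<dots> = (\<Sum>z\<in>X. \<Sum>b\<in>Bs. \<Sum>y\<in>X. W' x y (l - b - d y z) * ?W z w b)"
      by (rule sum.cong[OF refl]) (rule sum.swap)
    also have "\<dots> = (\<Sum>z\<in>X. \<Sum>b\<in>Bs. (\<Sum>y\<in>X. W' x y (l - b - d y z)) * ?W z w b)"
      by (simp add: sum_distrib_right)
    also have "\<dots> = (\<Sum>z\<in>X. \<Sum>b\<in>Bs. (if x = z \<and> l - b = 0 then 1 else 0) * ?W z w b)"
      by (intro sum.cong refl) (simp add: LW')
    also have "\<dots> = (\<Sum>b\<in>Bs. \<Sum>z\<in>X. (if x = z \<and> l - b = 0 then 1 else 0) * ?W z w b)"
      by (rule sum.swap)
    also have "\<dots> = (\<Sum>b\<in>Bs. if l - b = 0 then ?W x w b else 0)"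
      by (intro sum.cong refl) (rule sum_delta_mult[OF fX x])
    also have "\<dots> = (\<Sum>b\<in>Bs. if b = l then ?W x w b else 0)"
      by (intro sum.cong refl) auto
    also have "\<dots> = ?W x w l" using fBs by (simp add: sum.delta Bs_def)
    finally show ?thesis .
  qed
  have step: "(\<Sum>b\<in>Bs. W' x y (l - b - d y z) * ?W z w b) = (\<Sum>a\<in>F. W' x y a * ?W z w (l - a - d y z))"
    if y: "y \<in> X" and z: "z \<in> X" for y z
  proof -
    let ?g = "\<lambda>a. W' x y a * ?W z w (l - a - d y z)"
    have "(\<Sum>a\<in>F. ?g a) = (\<Sum>b\<in>Bs. ?g (l - d y z - b))"
    proof (rule sum_shift[OF fF fBs])
      fix a assume a: "a \<in> F" "?g a \<noteq> 0"
      then have a1: "W' x y a \<noteq> 0" and a2: "?W z w (l - a - d y z) \<noteq> 0" by auto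
      have "m \<le> a" using mle[OF y a1] .
      have e: "l - d y z - a = l - a - d y z" by simp
      have "l - a - d y z \<le> l - m" using \<open>m \<le> a\<close> dnn[OF y z] by simp
      then show "l - d y z - a \<in> Bs" using a2 z unfolding Bs_def e by auto
    next
      fix b assume b: "b \<in> Bs" "?g (l - d y z - b) \<noteq> 0"
      have e: "l - d y z - b = l - b - d y z" by simp
      have "(b, y, z) \<in> Bs \<times> X \<times> X" using b y z by simp
      then have "(\<lambda>(b,y,z). l - b - d y z) (b, y, z) \<in> (\<lambda>(b,y,z). l - b - d y z) ` (Bs \<times> X \<times> X)"
        by (rule imageI)
      then show "l - d y z - b \<in> F" unfolding F_def e by simp
    qed
    also have "\<dots> = (\<Sum>b\<in>Bs. W' x y (l - b - d y z) * ?W z w b)"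
    proof (rule sum.cong[OF refl])
      fix b
      have e1: "l - d y z - b = l - b - d y z" by simp
      have e2: "l - (l - d y z - b) - d y z = b" by simp
      show "?g (l - d y z - b) = W' x y (l - b - d y z) * ?W z w b" unfolding e2 unfolding e1 ..
    qed
    finally show ?thesis by simp
  qed
  have E1: "E = W' x w l"
  proof -
    have "E = (\<Sum>y\<in>X. \<Sum>z\<in>X. \<Sum>a\<in>F. W' x y a * ?W z w (l - a - d y z))"
      unfolding E_def
    proof (rule sum.cong[OF refl])
      fix y assume y: "y \<in> X"
      show "(\<Sum>z\<in>X. \<Sum>b\<in>Bs. W' x y (l - b - d y z) * ?W z w b) = (\<Sum>z\<in>X. \<Sum>a\<in>F. W' x y a * ?W z w (l - a - d y z))"
        by (rule sum.cong[OF refl]) (rule step[OF y])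
    qed
    also have "\<dots> = (\<Sum>y\<in>X. \<Sum>a\<in>F. \<Sum>z\<in>X. W' x y a * ?W z w (l - a - d y z))"
      by (rule sum.cong[OF refl]) (rule sum.swap)
    also have "\<dots> = (\<Sum>y\<in>X. \<Sum>a\<in>F. W' x y a * (\<Sum>z\<in>X. ?W z w (l - a - d y z)))"
      by (simp add: sum_distrib_left)
    also have "\<dots> = (\<Sum>y\<in>X. \<Sum>a\<in>F. W' x y a * (if y = w \<and> l - a = 0 then 1 else 0))"
      by (intro sum.cong refl) (simp add: RW)
    also have "\<dots> = (\<Sum>y\<in>X. if y = w then (\<Sum>a\<in>F. if a = l then W' x w a else 0) else 0)"
    proof (rule sum.cong[OF refl])
      fix y assume "y \<in> X"
      show "(\<Sum>a\<in>F. W' x y a * (if y = w \<and> l - a = 0 then 1 else 0)) = (if y = w then (\<Sum>a\<in>F. if a = l then W' x w a else 0) else 0)"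
        by (cases "y = w") (auto intro!: sum.cong)
    qed
    also have "\<dots> = W' x w l" using fX w fF by (simp add: sum.delta F_def)
    finally show ?thesis .
  qed
  show ?thesis using E1 E2 by simp
qed

lemma magnitude_eq:
  assumes fX: "finite X" and q: "quasi_metric_space X d" and ds: "dsep X d \<delta>"
  shows "magnitude X d = (\<lambda>l. \<Sum>x\<in>X. \<Sum>y\<in>X. Wm X d \<delta> x y l)"
  unfolding magnitude_def
proof (rule the_equality)
  show "\<exists>W. is_inverse_of_Z X d W \<and> (\<lambda>l. \<Sum>x\<in>X. \<Sum>y\<in>X. Wm X d \<delta> x y l) = (\<lambda>l. \<Sum>x\<in>X. \<Sum>y\<in>X. W x y l)"
    using Wm_inverse[OF fX q ds] by blast
next
  fix m assume "\<exists>W. is_inverse_of_Z X d W \<and> m = (\<lambda>l. \<Sum>x\<in>X. \<Sum>y\<in>X. W x y l)"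
  then obtain W' where W': "is_inverse_of_Z X d W'" "m = (\<lambda>l. \<Sum>x\<in>X. \<Sum>y\<in>X. W' x y l)" by blast
  show "m = (\<lambda>l. \<Sum>x\<in>X. \<Sum>y\<in>X. Wm X d \<delta> x y l)"
    unfolding W'(2) using W_unique[OF fX q ds W'(1)] by (intro ext sum.cong refl) auto
qed

lemma delta_exists:
  assumes fX: "finite X" and q: "quasi_metric_space X d"
  shows "\<exists>\<delta>. dsep X d \<delta>"
proof -
  define D where "D = (\<lambda>p. d (fst p) (snd p)) ` {p \<in> X \<times> X. fst p \<noteq> snd p}"
  have fD: "finite D" unfolding D_def using fX by auto
  show ?thesis
  proof (cases "D = {}")
    case True
    then have "dsep X d 1" unfolding dsep_def D_def by auto
    then show ?thesis by blast
  next
    case False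
    have pos: "\<forall>v\<in>D. 0 < v" unfolding D_def using qms_pos[OF q] by auto
    have "0 < Min D" using Min_in[OF fD False] pos by blast
    moreover have "\<forall>x\<in>X. \<forall>y\<in>X. x \<noteq> y \<longrightarrow> Min D \<le> d x y"
    proof (intro ballI impI)
      fix x y assume "x \<in> X" "y \<in> X" "x \<noteq> y"
      then have "d x y \<in> D" unfolding D_def by (intro image_eqI[of _ _ "(x, y)"]) auto
      then show "Min D \<le> d x y" using Min_le[OF fD] by blast
    qed
    ultimately have "dsep X d (Min D)" unfolding dsep_def by blast
    then show ?thesis by blast
  qed
qed

theorem corollary6p18:
  fixes X :: "'a set" and d :: "'a \<Rightarrow> 'a \<Rightarrow> real"
  assumes "finite X" and "quasi_metric_space X d"
  shows "hahn_tendsto (\<lambda>N. (\<lambda>l. \<Sum>n<N. (-1) ^ n * HM_rank_series X d n l)) (magnitude X d)"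
proof -
  note fX = assms(1) and q = assms(2)
  obtain \<delta> where ds: "dsep X d \<delta>" using delta_exists[OF fX q] by blast
  have dpos: "\<delta> > 0" using ds unfolding dsep_def by simp
  show ?thesis unfolding hahn_tendsto_def
  proof
    fix L :: real
    show "\<exists>N0. \<forall>N\<ge>N0. \<forall>l<L. (\<Sum>n<N. (-1) ^ n * HM_rank_series X d n l) = magnitude X d l"
    proof (intro exI allI impI)
      fix N l assume N: "Nb \<delta> L \<le> N" and l: "l < L"
      have NL: "Nb \<delta> l \<le> N" using Nb_mono[OF dpos, of l L] l N by simp
      have "(\<Sum>n<N. (-1) ^ n * HM_rank_series X d n l) = (\<Sum>n<N. (-1)^n * of_nat (card (mag_gens X d n l)))"
        by (rule euler_mag[OF q fX gens_empty_big[OF ds NL]])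
      also have "\<dots> = (\<Sum>n<N. (-1)^n * (\<Sum>x\<in>X. \<Sum>z\<in>X. Pn X d n x z l))"
        unfolding gens_card_paths[OF fX] Pn_def by (simp add: of_nat_sum)
      also have "\<dots> = (\<Sum>x\<in>X. \<Sum>z\<in>X. \<Sum>n<N. (-1)^n * Pn X d n x z l)"
        by (simp add: sum_distrib_left sum.swap[of _ "{..<N}"])
      also have "\<dots> = (\<Sum>x\<in>X. \<Sum>z\<in>X. Wm X d \<delta> x z l)"
        using Wm_ext[OF ds _ NL] by (intro sum.cong refl) simp
      also have "\<dots> = magnitude X d l" unfolding magnitude_eq[OF fX q ds] ..
      finally show "(\<Sum>n<N. (-1) ^ n * HM_rank_series X d n l) = magnitude X d l" .
    qed
  qed
qed


end
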